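(* Let $\mathbb{S}^2_\infty$ be the Euclidean unit sphere centered at the origin in $\mathbb{R}^3$, equipped with the $\ell^\infty$-metric, and $\mathbb{D}^3_\infty$ the Euclidean closed unit ball with the $\ell^\infty$-metric. Then: (1) $\mathcal{F}(\mathbb{S}^2_\infty)=\mathcal{E}(\mathbb{S}^2_\infty)$, and this set is isometric to the tight span $\mathbf{E}(\mathbb{S}^2_\infty)$; (2) $\mathcal{F}(\mathbb{D}^3_\infty)=\mathcal{E}(\mathbb{D}^3_\infty)=\mathcal{F}(\mathbb{S}^2_\infty)$, and this set is isometric to the tight span $\mathbf{E}(\mathbb{D}^3_\infty)$. In addition, $\mathbf{E}(\mathbb{D}^3_\infty)$ is isometric to $\mathbf{E}(\mathbb{S}^2_\infty)$.
   Context: $\mathbb{R}^3_\infty$ is $\mathbb{R}^3$ with the $\ell^\infty$-metric $d_\infty$. For $1\le i\le 3$, $\Lambda_i=\{x:x_i=\|x\|_\infty\}$ and $p+\xi\Lambda_i=\{p+\xi z:z\in\Lambda_i\}$ for $\xi\in\{\pm1\}$. For compact $X\subseteq\mathbb{R}^3_\infty$: $\mathcal{F}(X)$ is the set of points $p$ with $(p+\xi\Lambda_i)\cap X\ne\emptyset$ for all $i$ and $\xi$ ($X$-surrounding points); $\mathcal{E}(X)$ is the set of points $z\in\mathbb{R}^3$ such that for every $x\in X$ there is $y\in X$ with $d_\infty(x,z)+d_\infty(z,y)=d_\infty(x,y)$ ($X$-minimal points); both carry the metric $d_\infty$. For a metric space $X$, $\Delta(X)=\{f:X\to\mathbb{R}\text{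 bounded}:f(x)+f(x')\ge d_X(x,x')\}$ and the tight span $\mathbf{E}(X)$ is the set of pointwise-minimal elements of $\Delta(X)$ with the sup-norm metric. *)

theory Defs
  imports "HOL-Analysis.Analysis"
begin

definition linf_norm :: "real^3 \<Rightarrow> real" where
  "linf_norm x = Max (range (\<lambda>i. \<bar>x $ i\<bar>))"

definition d_inf :: "real^3 \<Rightarrow> real^3 \<Rightarrow> real" where
  "d_inf x y = linf_norm (x - y)"

definition Lambda :: "3 \<Rightarrow> (real^3) set" where
  "Lambda i = {x. x $ i = linf_norm x}"

definition cone_at :: "real^3 \<Rightarrow> real \<Rightarrow> 3 \<Rightarrow> (real^3) set" where
  "cone_at p \<xi> i = {p + \<xi> *\<^sub>R z | z. z \<in> Lambda i}"

definition surrounding :: "(real^3) set \<Rightarrow> (real^3) set" where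
  "surrounding X = {p. \<forall>i. \<forall>\<xi>\<in>{1, -1}. cone_at p \<xi> i \<inter> X \<noteq> {}}"

definition minimal_pts :: "(real^3) set \<Rightarrow> (real^3) set" where
  "minimal_pts X = {z. \<forall>x\<in>X. \<exists>y\<in>X. d_inf x z + d_inf z y = d_inf x y}"

definition Delta :: "'a set \<Rightarrow> ('a \<Rightarrow> 'a \<Rightarrow> real) \<Rightarrow> ('a \<Rightarrow> real) set" where
  "Delta X d = {f. (\<forall>x. x \<notin> X \<longrightarrow> f x = 0) \<and> (\<exists>B. \<forall>x\<in>X. \<bar>f x\<bar> \<le> B)
                 \<and> (\<forall>x\<in>X. \<forall>x'\<in>X. f x + f x' \<ge> d x x')}"

definition tight_span :: "'a set \<Rightarrow> ('a \<Rightarrow> 'a \<Rightarrow> real) \<Rightarrow> ('a \<Rightarrow> real) set" where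
  "tight_span X d = {f \<in> Delta X d. \<forall>g\<in>Delta X d. (\<forall>x\<in>X. g x \<le> f x) \<longrightarrow> (\<forall>x\<in>X. g x = f x)}"

definition sup_dist :: "'a set \<Rightarrow> ('a \<Rightarrow> real) \<Rightarrow> ('a \<Rightarrow> real) \<Rightarrow> real" where
  "sup_dist X f g = (SUP x\<in>X. \<bar>f x - g x\<bar>)"

definition isometric :: "'a set \<Rightarrow> ('a \<Rightarrow> 'a \<Rightarrow> real) \<Rightarrow> 'b set \<Rightarrow> ('b \<Rightarrow> 'b \<Rightarrow> real) \<Rightarrow> bool" where
  "isometric A dA B dB \<longleftrightarrow> (\<exists>h. bij_betw h A B \<and> (\<forall>x\<in>A. \<forall>y\<in>A. dB (h x) (h y) = dA x y))"

end

theory Submission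
  imports Defs
begin


lemma fin_range3: "finite (range (f :: 3 \<Rightarrow> real))" by simp

lemma linf_ge: "\<bar>x$i\<bar> \<le> linf_norm x"
  unfolding linf_norm_def by (rule Max_ge) auto

lemma linf_attained: "\<exists>i. linf_norm x = \<bar>x$i\<bar>"
proof -
  have "linf_norm x \<in> range (\<lambda>i. \<bar>x$i\<bar>)" unfolding linf_norm_def by (rule Max_in) auto
  then show ?thesis by auto
qed

lemma linf_le: "(\<And>i. \<bar>x$i\<bar> \<le> c) \<Longrightarrow> linf_norm x \<le> c"
  using linf_attained[of x] by metis

lemma linf_nonneg: "0 \<le> linf_norm x"
  using linf_ge[of x] abs_ge_zero order_trans by blast

lemma linf_le_norm: "linf_norm x \<le> norm x"
  by (rule linf_le) (rule component_le_norm_cart)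

lemma linf_zero: "linf_norm x = 0 \<Longrightarrow> x = 0"
  using linf_ge[of x] by (simp add: vec_eq_iff)

lemma d_sym: "d_inf x y = d_inf y x"
  unfolding d_inf_def
  by (rule antisym; rule linf_le; metis linf_ge abs_minus_commute vector_minus_component)

lemma d_tri: "d_inf x z \<le> d_inf x y + d_inf y z"
  unfolding d_inf_def
proof (rule linf_le)
  fix i
  have "\<bar>(x - z)$i\<bar> \<le> \<bar>(x-y)$i\<bar> + \<bar>(y-z)$i\<bar>" by simp
  also have "\<dots> \<le> linf_norm (x-y) + linf_norm (y-z)" by (intro add_mono linf_ge)
  finally show "\<bar>(x - z)$i\<bar> \<le> linf_norm (x-y) + linf_norm (y-z)" .
qed

lemma d_self[simp]: "d_inf x x = 0"
  unfolding d_inf_def by (rule antisym, rule linf_le) (auto simp: linf_nonneg)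

lemma d_nonneg: "0 \<le> d_inf x y" unfolding d_inf_def by (rule linf_nonneg)

lemma d_eq0: "d_inf x y = 0 \<Longrightarrow> x = y"
  unfolding d_inf_def using linf_zero by fastforce

lemma d_coord: "\<bar>x$i - y$i\<bar> \<le> d_inf x y"
  unfolding d_inf_def using linf_ge[of "x-y" i] by simp

lemma d_attained: "\<exists>i. d_inf x y = \<bar>x$i - y$i\<bar>"
  unfolding d_inf_def using linf_attained[of "x-y"] by simp

lemma d_le: "(\<And>i. \<bar>x$i - y$i\<bar> \<le> c) \<Longrightarrow> d_inf x y \<le> c"
  unfolding d_inf_def by (rule linf_le) simp

lemma d_le_dist: "d_inf x y \<le> dist x y"
  unfolding d_inf_def dist_norm by (rule linf_le_norm)

lemma mem_cone: "\<xi> \<in> {1,-1} \<Longrightarrow> q \<in> cone_at p \<xi> i \<longleftrightarrow> \<xi> * (q$i - p$i) = d_inf q p"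
proof -
  assume xi: "\<xi> \<in> {1,-1}"
  have xx: "\<xi> * \<xi> = 1" using xi by auto
  have "q \<in> cone_at p \<xi> i \<longleftrightarrow> \<xi> *\<^sub>R (q - p) \<in> Lambda i"
  proof
    assume "q \<in> cone_at p \<xi> i"
    then obtain z where "z \<in> Lambda i" "q = p + \<xi> *\<^sub>R z" unfolding cone_at_def by auto
    moreover have "\<xi> *\<^sub>R (\<xi> *\<^sub>R z) = z" using xx by (simp add: scaleR_scaleR)
    ultimately show "\<xi> *\<^sub>R (q - p) \<in> Lambda i" by simp
  next
    assume "\<xi> *\<^sub>R (q - p) \<in> Lambda i"
    moreover have "q = p + \<xi> *\<^sub>R (\<xi> *\<^sub>R (q - p))" using xx by (simp add: scaleR_scaleR)
    ultimately show "q \<in> cone_at p \<xi> i" unfolding cone_at_def by blast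
  qed
  moreover have "linf_norm (\<xi> *\<^sub>R (q - p)) = d_inf q p"
    using xi
  proof
    assume "\<xi> = 1" then show ?thesis by (simp add: d_inf_def)
  next
    assume "\<xi> \<in> {-1}" then show ?thesis using d_sym[of q p] by (simp add: d_inf_def)
  qed
  ultimately show ?thesis unfolding Lambda_def by simp
qed



lemma mem_surr: "z \<in> surrounding X \<longleftrightarrow> (\<forall>i. \<forall>\<xi>\<in>{1,-1}. \<exists>q\<in>X. \<xi> * (q$i - z$i) = d_inf q z)"
proof -
  have "\<And>i \<xi>. \<xi>\<in>{1,-1} \<Longrightarrow> (cone_at z \<xi> i \<inter> X \<noteq> {}) = (\<exists>q\<in>X. \<xi> * (q$i - z$i) = d_inf q z)"
    using mem_cone by blast
  then show ?thesis unfolding surrounding_def by simp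
qed

lemma F_sub_E: "surrounding X \<subseteq> minimal_pts X"
proof
  fix z assume z: "z \<in> surrounding X"
  show "z \<in> minimal_pts X" unfolding minimal_pts_def
  proof (intro CollectI ballI)
    fix x assume x: "x \<in> X"
    obtain k where k: "d_inf x z = \<bar>x$k - z$k\<bar>" using d_attained by blast
    show "\<exists>y\<in>X. d_inf x z + d_inf z y = d_inf x y"
    proof (cases "x$k \<ge> z$k")
      case True
      then obtain y where y: "y \<in> X" "-1 * (y$k - z$k) = d_inf y z" using z by (auto simp: mem_surr)
      have "d_inf x y \<ge> \<bar>x$k - y$k\<bar>" by (rule d_coord)
      moreover have "\<bar>x$k - y$k\<bar> = d_inf x z + d_inf z y"
        using k y True d_sym[of y z] d_nonneg[of y z] by auto
      ultimately show ?thesis using d_tri[of x y z] y(1) by (intro bexI[of _ y]) auto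
    next
      case False
      then obtain y where y: "y \<in> X" "1 * (y$k - z$k) = d_inf y z" using z by (auto simp: mem_surr)
      have "d_inf x y \<ge> \<bar>x$k - y$k\<bar>" by (rule d_coord)
      moreover have "\<bar>x$k - y$k\<bar> = d_inf x z + d_inf z y"
        using k y False d_sym[of y z] d_nonneg[of y z] by auto
      ultimately show ?thesis using d_tri[of x y z] y(1) by (intro bexI[of _ y]) auto
    qed
  qed
qed

lemma geodesic:
  assumes "d_inf x z + d_inf z y = d_inf x y"
  shows "\<exists>k. \<bar>x$k - z$k\<bar> = d_inf x z \<and> \<bar>z$k - y$k\<bar> = d_inf z y \<and> (x$k - z$k)*(z$k - y$k) \<ge> 0"
proof -
  obtain k where k: "d_inf x y = \<bar>x$k - y$k\<bar>" using d_attained by blast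
  have a: "\<bar>x$k - z$k\<bar> \<le> d_inf x z" "\<bar>z$k - y$k\<bar> \<le> d_inf z y" by (rule d_coord)+
  have b: "\<bar>x$k - y$k\<bar> \<le> \<bar>x$k - z$k\<bar> + \<bar>z$k - y$k\<bar>" by simp
  have e1: "\<bar>x$k - z$k\<bar> = d_inf x z" "\<bar>z$k - y$k\<bar> = d_inf z y" using a b k assms by linarith+
  have "\<bar>(x$k - z$k) + (z$k - y$k)\<bar> = \<bar>x$k - z$k\<bar> + \<bar>z$k - y$k\<bar>" using e1 k assms by simp
  then have "(x$k - z$k)*(z$k - y$k) \<ge> 0"
    by (smt (verit, best) mult_nonneg_nonneg mult_nonpos_nonpos)
  then show ?thesis using e1 by blast
qed

lemma E_sub_F:
  assumes XD: "X \<subseteq> cball 0 1" and ax: "\<And>i. axis i 1 \<in> X" "\<And>i. - axis i 1 \<in> X"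
  shows "minimal_pts X \<subseteq> surrounding X"
proof
  fix z assume zE: "z \<in> minimal_pts X"
  show "z \<in> surrounding X"
  proof (rule ccontr)
    assume "z \<notin> surrounding X"
    then obtain j \<xi> where xi: "\<xi> \<in> {1,-1}" and miss: "\<And>q. q \<in> X \<Longrightarrow> \<xi> * (q$j - z$j) \<noteq> d_inf q z"
      unfolding mem_surr by blast
    have zX: "z \<notin> X" using miss[of z] by auto
    have coord: "\<bar>q$i\<bar> \<le> 1" if "q \<in> X" for q i
      using that XD component_le_norm_cart[of q i] by (auto simp: dist_norm) 
    have d2: "d_inf q q' \<le> 2" if "q \<in> X" "q' \<in> X" for q q'
      proof (rule d_le)
      fix i show "\<bar>q$i - q'$i\<bar> \<le> 2" using coord[OF that(1), of i] coord[OF that(2), of i] by linarith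
    qed
    define u where "u i = (if z$i \<ge> 0 then - axis i (1::real) else axis i 1)" for i
    have uX: "u i \<in> X" for i using ax by (simp add: u_def)
    have ui: "\<bar>u i $ i - z$i\<bar> = 1 + \<bar>z$i\<bar>" for i by (simp add: u_def)
    have uk: "u i $ k = 0" if "k \<noteq> i" for i k using that by (simp add: u_def axis_def)
    from zE have E: "\<And>x. x \<in> X \<Longrightarrow> \<exists>y\<in>X. d_inf x z + d_inf z y = d_inf x y"
      unfolding minimal_pts_def by blast
    show False
    proof (cases "\<exists>i. \<bar>z$i\<bar> \<ge> 1")
      case True
      then obtain i where i: "\<bar>z$i\<bar> \<ge> 1" by blast
      obtain y where y: "y \<in> X" "d_inf (u i) z + d_inf z y = d_inf (u i) y" using E[OF uX] by blast
      have "d_inf (u i) z \<ge> 2" using d_coord[of "u i" i z] ui[of i] i by linarith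
      then have "d_inf z y \<le> 0" using y d2[OF uX[of i] y(1)] by linarith
      then have "z = y" using d_nonneg[of z y] d_eq0 by force
      then show False using zX y by simp
    next
      case False
      then have small: "\<bar>z$i\<bar> < 1" for i by (meson not_le)
      let ?x = "u j"
      obtain y where y: "y \<in> X" "d_inf ?x z + d_inf z y = d_inf ?x y" using E[OF uX] by blast
      obtain k where k: "\<bar>?x$k - z$k\<bar> = d_inf ?x z" "\<bar>z$k - y$k\<bar> = d_inf z y"
        "(?x$k - z$k)*(z$k - y$k) \<ge> 0" using geodesic[OF y(2)] by blast
      have big: "d_inf ?x z \<ge> 1" using d_coord[of ?x j z] ui[of j] by linarith
      have kj: "k = j"
      proof (rule ccontr)
        assume "k \<noteq> j"
        then have "\<bar>?x$k - z$k\<bar> < 1" using uk small[of k] by simp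
        then show False using k(1) big by linarith
      qed
      have dyz: "d_inf z y = d_inf y z" by (rule d_sym)
      show False
      proof (cases "?x$j - z$j \<ge> 0")
        case True
        have pos: "?x$j - z$j > 0" using True ui[of j] small[of j] by auto
        have "z$j - y$j \<ge> 0" using k(3) kj pos by (auto simp: zero_le_mult_iff)
        then have c1: "-1 * (y$j - z$j) = d_inf y z" using k(2) kj dyz by simp
        have c2: "1 * (?x$j - z$j) = d_inf ?x z" using k(1) kj True by simp
        from xi show False using miss[OF y(1)] miss[OF uX] c1 c2 by auto
      next
        case False
        have "z$j - y$j \<le> 0"
          using k(3) kj False by (auto simp: zero_le_mult_iff)
        then have c1: "1 * (y$j - z$j) = d_inf y z" using k(2) kj dyz by simp
        have c2: "-1 * (?x$j - z$j) = d_inf ?x z" using k(1) kj False by simp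
        from xi show False using miss[OF y(1)] miss[OF uX] c1 c2 by auto
      qed
    qed
  qed
qed



lemma surr_mono: "X \<subseteq> Y \<Longrightarrow> surrounding X \<subseteq> surrounding Y"
  unfolding surrounding_def by blast

lemma norm_add_axis_sq:
  "(norm (q + c *\<^sub>R axis i (1::real)))\<^sup>2 = (norm q)\<^sup>2 + 2 * c * q$i + c\<^sup>2"
proof -
  have "(norm (q + c *\<^sub>R axis i (1::real)))\<^sup>2 = inner (q + c *\<^sub>R axis i 1) (q + c *\<^sub>R axis i 1)"
    by (simp add: power2_norm_eq_inner)
  also have "\<dots> = inner q q + 2 * c * inner q (axis i 1) + c * c * inner (axis i (1::real)) (axis i 1)"
    by (simp add: inner_add_left inner_add_right inner_commute algebra_simps)
  also have "\<dots> = (norm q)\<^sup>2 + 2 * c * q$i + c\<^sup>2"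
    by (simp add: inner_axis inner_axis_axis dot_square_norm power2_eq_square)
  finally show ?thesis .
qed

lemma FD_sub_FS: "surrounding (cball (0::real^3) 1) \<subseteq> surrounding (sphere 0 1)"
proof
  fix p :: "real^3" assume p: "p \<in> surrounding (cball 0 1)"
  show "p \<in> surrounding (sphere 0 1)" unfolding mem_surr
  proof (intro allI ballI)
    fix i and \<xi> :: real assume xi: "\<xi> \<in> {1,-1}"
    obtain q where q: "q \<in> cball 0 1" "\<xi> * (q$i - p$i) = d_inf q p"
      using p xi unfolding mem_surr by blast
    have xx: "\<xi> * \<xi> = 1" "\<bar>\<xi>\<bar> = 1" using xi by auto
    define a where "a = \<xi> * q$i"
    have nq: "norm q \<le> 1" using q(1) by simp
    define t where "t = - a + sqrt (a\<^sup>2 + 1 - (norm q)\<^sup>2)"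
    have "sqrt (a\<^sup>2) \<le> sqrt (a\<^sup>2 + 1 - (norm q)\<^sup>2)"
      using nq norm_ge_zero[of q] by (intro real_sqrt_le_mono) (simp add: power_le_one)
    then have t0: "t \<ge> 0" unfolding t_def by simp
    have nq2: "(norm q)\<^sup>2 \<le> 1" using nq norm_ge_zero[of q] by (simp add: power_le_one)
    have "a\<^sup>2 \<ge> 0" by simp
    then have "a\<^sup>2 + 1 - (norm q)\<^sup>2 \<ge> 0" using nq2 by linarith
    then have ta: "(t + a)\<^sup>2 = a\<^sup>2 + 1 - (norm q)\<^sup>2"
      unfolding t_def by simp
    define q' where "q' = q + (t * \<xi>) *\<^sub>R axis i 1"
    have "(norm q')\<^sup>2 = (norm q)\<^sup>2 + 2 * (t * \<xi>) * q$i + (t*\<xi>)\<^sup>2"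
      unfolding q'_def by (rule norm_add_axis_sq)
    also have "\<dots> = (norm q)\<^sup>2 + 2 * t * a + t\<^sup>2"
      using xx by (simp add: a_def power2_eq_square algebra_simps)
    also have "\<dots> = 1" using ta by (simp add: power2_eq_square algebra_simps)
    finally have "norm q' = 1 \<or> norm q' = -1" by (simp add: power2_eq_1_iff)
    then have "norm q' = 1" using norm_ge_zero[of q'] by linarith
    then have q'S: "q' \<in> sphere 0 1" by simp
    have q'i: "q'$i = q$i + t * \<xi>" by (simp add: q'_def)
    have q'k: "q'$k = q$k" if "k \<noteq> i" for k using that by (simp add: q'_def axis_def)
    have lhs: "\<xi> * (q'$i - p$i) = d_inf q p + t" using q(2) xx by (simp add: q'i algebra_simps)
    have "d_inf q' p \<le> d_inf q p + t"
    proof (rule d_le)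
      fix k show "\<bar>q'$k - p$k\<bar> \<le> d_inf q p + t"
      proof (cases "k = i")
        case True
        have "\<bar>q'$k - p$k\<bar> = \<bar>\<xi> * (q'$i - p$i)\<bar>" using True xx by (simp add: abs_mult)
        also have "\<dots> = d_inf q p + t" using lhs t0 d_nonneg[of q p] by simp
        finally show ?thesis by simp
      next
        case False
        then show ?thesis using q'k[OF False] d_coord[of q k p] t0 by simp
      qed
    qed
    moreover have "d_inf q' p \<ge> \<bar>\<xi> * (q'$i - p$i)\<bar>" using d_coord[of q' i p] xx by (simp add: abs_mult)
    ultimately have "\<xi> * (q'$i - p$i) = d_inf q' p" using lhs t0 d_nonneg[of q p] by simp
    then show "\<exists>q\<in>sphere 0 1. \<xi> * (q$i - p$i) = d_inf q p" using q'S by blast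
  qed
qed

lemma FD_eq_FS: "surrounding (cball (0::real^3) 1) = surrounding (sphere 0 1)"
  using FD_sub_FS surr_mono[of "sphere (0::real^3) 1" "cball 0 1"] by auto



definition hmap :: "(real^3) set \<Rightarrow> real^3 \<Rightarrow> real^3 \<Rightarrow> real" where
  "hmap X z = (\<lambda>x. if x \<in> X then d_inf x z else 0)"

lemma h_Delta:
  assumes "bounded X" shows "hmap X z \<in> Delta X d_inf"
proof -
  obtain B where B: "\<And>x. x \<in> X \<Longrightarrow> norm x \<le> B" using assms bounded_iff by metis
  have "\<bar>hmap X z x\<bar> \<le> B + norm z" if "x \<in> X" for x
  proof -
    have "\<bar>hmap X z x\<bar> = d_inf x z" using that d_nonneg by (simp add: hmap_def)
    also have "\<dots> \<le> dist x z" by (rule d_le_dist)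
    also have "\<dots> \<le> norm x + norm z" by (simp add: dist_norm norm_triangle_ineq4)
    finally show ?thesis using B[OF that] by linarith
  qed
  moreover have "hmap X z x + hmap X z x' \<ge> d_inf x x'" if "x \<in> X" "x' \<in> X" for x x'
    using that d_tri[of x x' z] d_sym[of x' z] by (simp add: hmap_def)
  ultimately show ?thesis unfolding Delta_def by (auto simp: hmap_def)
qed

lemma h_tight:
  assumes "bounded X" "z \<in> minimal_pts X" shows "hmap X z \<in> tight_span X d_inf"
  unfolding tight_span_def
proof (intro CollectI conjI ballI impI h_Delta[OF assms(1)])
  fix g x assume g: "g \<in> Delta X d_inf" and le: "\<forall>x\<in>X. g x \<le> hmap X z x" and x: "x \<in> X"
  obtain y where y: "y \<in> X" "d_inf x z + d_inf z y = d_inf x y" using assms(2) x unfolding minimal_pts_def by blast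
  have "d_inf x y \<le> g x + g y" using g x y(1) unfolding Delta_def by blast
  moreover have "g y \<le> d_inf y z" using le y(1) by (auto simp: hmap_def)
  moreover have "g x \<le> d_inf x z" using le x by (auto simp: hmap_def)
  ultimately show "g x = hmap X z x" using y(2) d_sym[of z y] x by (simp add: hmap_def)
qed

lemma h_dist:
  assumes ne: "X \<noteq> {}" and z': "z' \<in> surrounding X"
  shows "sup_dist X (hmap X z) (hmap X z') = d_inf z z'"
proof -
  have ub: "\<bar>hmap X z x - hmap X z' x\<bar> \<le> d_inf z z'" if "x \<in> X" for x
    using that d_tri[of x z z'] d_tri[of x z' z] d_sym[of z z'] by (simp add: hmap_def abs_le_iff)
  obtain k where k: "d_inf z z' = \<bar>z$k - z'$k\<bar>" using d_attained by blast
  have "\<exists>x\<in>X. \<bar>hmap X z x - hmap X z' x\<bar> \<ge> d_inf z z'"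
  proof (cases "z$k \<ge> z'$k")
    case True
    then obtain x where x: "x \<in> X" "-1 * (x$k - z'$k) = d_inf x z'" using z' by (auto simp: mem_surr)
    have "z$k - x$k \<le> d_inf x z" using d_coord[of x k z] unfolding abs_le_iff by linarith
    moreover have "d_inf z z' = z$k - z'$k" using k True by simp
    moreover have "d_inf x z' = x$k - z'$k \<or> d_inf x z' = z'$k - x$k" using x(2) by auto
    ultimately have "d_inf x z - d_inf x z' \<ge> d_inf z z'" using x(2) by auto
    then show ?thesis using x(1) by (intro bexI[of _ x]) (auto simp: hmap_def)
  next
    case False
    then obtain x where x: "x \<in> X" "1 * (x$k - z'$k) = d_inf x z'" using z' by (auto simp: mem_surr)
    have "x$k - z$k \<le> d_inf x z" using d_coord[of x k z] unfolding abs_le_iff by linarith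
    moreover have "d_inf z z' = z'$k - z$k" using k False by simp
    moreover have "d_inf x z' = x$k - z'$k \<or> d_inf x z' = z'$k - x$k" using x(2) by auto
    ultimately have "d_inf x z - d_inf x z' \<ge> d_inf z z'" using x(2) by auto
    then show ?thesis using x(1) by (intro bexI[of _ x]) (auto simp: hmap_def)
  qed
  then obtain x0 where x0: "x0 \<in> X" "\<bar>hmap X z x0 - hmap X z' x0\<bar> \<ge> d_inf z z'" by blast
  have bdd: "bdd_above ((\<lambda>x. \<bar>hmap X z x - hmap X z' x\<bar>) ` X)"
    using ub by (intro bdd_aboveI2) 
  show ?thesis unfolding sup_dist_def
  proof (rule antisym)
    show "(SUP x\<in>X. \<bar>hmap X z x - hmap X z' x\<bar>) \<le> d_inf z z'" using ne ub by (intro cSUP_least) auto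
    show "d_inf z z' \<le> (SUP x\<in>X. \<bar>hmap X z x - hmap X z' x\<bar>)"
      by (rule cSUP_upper2[OF bdd x0(1) x0(2)])
  qed
qed

lemma h_surj:
  assumes cX: "compact X" and ne: "X \<noteq> {}" and f: "f \<in> tight_span X d_inf"
  shows "\<exists>z\<in>minimal_pts X. f = hmap X z"
proof -
  have bX: "bounded X" using cX compact_imp_bounded by blast
  have fD: "f \<in> Delta X d_inf" and fmin: "\<And>g. g \<in> Delta X d_inf \<Longrightarrow> (\<forall>x\<in>X. g x \<le> f x) \<Longrightarrow> (\<forall>x\<in>X. g x = f x)"
    using f unfolding tight_span_def by blast+
  have fout: "\<And>x. x \<notin> X \<Longrightarrow> f x = 0" and fineq: "\<And>x x'. x \<in> X \<Longrightarrow> x' \<in> X \<Longrightarrow> f x + f x' \<ge> d_inf x x'"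
    using fD unfolding Delta_def by blast+
  define z :: "real^3" where "z = (\<chi> k. SUP x\<in>X. x$k - f x)"
  have zk: "x$k - f x \<le> z$k \<and> z$k \<le> x$k + f x" if x: "x \<in> X" for x k
  proof -
    have b: "x'$k - f x' \<le> x$k + f x" if "x' \<in> X" for x'
      using fineq[OF that x] d_coord[of x' k x] by (simp add: abs_le_iff) 
    have bdd: "bdd_above ((\<lambda>x'. x'$k - f x') ` X)" using b by (intro bdd_aboveI2)
    have "x$k - f x \<le> (SUP x'\<in>X. x'$k - f x')" using x bdd by (intro cSUP_upper)
    moreover have "(SUP x'\<in>X. x'$k - f x') \<le> x$k + f x" using ne b by (intro cSUP_least) auto
    ultimately show ?thesis by (simp add: z_def)
  qed
  have dle: "d_inf x z \<le> f x" if "x \<in> X" for x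
  proof (rule d_le)
    fix i show "\<bar>x$i - z$i\<bar> \<le> f x" unfolding abs_le_iff using zk[OF that, of i] by linarith
  qed
  have hD: "hmap X z \<in> Delta X d_inf" by (rule h_Delta[OF bX])
  have heq: "\<forall>x\<in>X. hmap X z x = f x" using fmin[OF hD] dle by (simp add: hmap_def)
  have fh: "f = hmap X z"
  proof
    fix x show "f x = hmap X z x" using heq fout by (cases "x \<in> X") (auto simp: hmap_def)
  qed
  have hmin: "\<And>g. g \<in> Delta X d_inf \<Longrightarrow> (\<forall>x\<in>X. g x \<le> hmap X z x) \<Longrightarrow> (\<forall>x\<in>X. g x = hmap X z x)"
    using fmin fh by simp
  have "z \<in> minimal_pts X" unfolding minimal_pts_def
  proof (intro CollectI ballI)
    fix x0 assume x0: "x0 \<in> X"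
    define \<phi> where "\<phi> y = d_inf x0 y - d_inf z y" for y
    have "2-lipschitz_on X \<phi>"
    proof (rule lipschitz_onI)
      fix y y' assume "y \<in> X" "y' \<in> X"
      have "dist (\<phi> y) (\<phi> y') \<le> 2 * d_inf y y'"
        using d_tri[of x0 y y'] d_tri[of x0 y' y] d_tri[of z y y'] d_tri[of z y' y] d_sym[of y y']
        by (simp add: \<phi>_def dist_real_def abs_le_iff)
      also have "\<dots> \<le> 2 * dist y y'" using d_le_dist[of y y'] by simp
      finally show "dist (\<phi> y) (\<phi> y') \<le> 2 * dist y y'" .
    qed simp
    then have "continuous_on X \<phi>" by (rule lipschitz_on_continuous_on)
    then obtain y0 where y0: "y0 \<in> X" "\<And>y. y \<in> X \<Longrightarrow> \<phi> y \<le> \<phi> y0"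
      using continuous_attains_sup[OF cX ne] by blast
    have phle: "\<phi> y \<le> d_inf x0 z" for y using d_tri[of x0 y z] by (simp add: \<phi>_def)
    show "\<exists>y\<in>X. d_inf x0 z + d_inf z y = d_inf x0 y"
    proof (cases "\<phi> y0 = d_inf x0 z")
      case True
      then show ?thesis using y0(1) by (intro bexI[of _ y0]) (auto simp: \<phi>_def)
    next
      case False
      then have lt: "\<phi> y0 < d_inf x0 z" using phle[of y0] by simp
      define g where "g = (hmap X z)(x0 := max (\<phi> y0) 0)"
      obtain B where B: "\<forall>x\<in>X. \<bar>hmap X z x\<bar> \<le> B" using hD unfolding Delta_def by blast
      have gD: "g \<in> Delta X d_inf" unfolding Delta_def
      proof (intro CollectI conjI allI impI ballI)
        fix x assume "x \<notin> X" then show "g x = 0" using x0 by (auto simp: g_def hmap_def)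
      next
        show "\<exists>B. \<forall>x\<in>X. \<bar>g x\<bar> \<le> B"
          using B by (intro exI[of _ "max B \<bar>max (\<phi> y0) 0\<bar>"]) (auto simp: g_def)
      next
        fix x x' assume x: "x \<in> X" and x': "x' \<in> X"
        have A: "max (\<phi> y0) 0 + d_inf w z \<ge> d_inf x0 w" if "w \<in> X" for w
          using y0(2)[OF that] by (simp add: \<phi>_def d_sym[of z w])
        have A': "d_inf x0 w = d_inf w x0" for w by (rule d_sym)
        have H: "hmap X z x + hmap X z x' \<ge> d_inf x x'" using hD x x' unfolding Delta_def by blast
        show "g x + g x' \<ge> d_inf x x'"
          using A[OF x] A[OF x'] A'[of x] H x x' by (auto simp: g_def hmap_def)
      qed
      have "\<forall>x\<in>X. g x \<le> hmap X z x" using lt d_nonneg[of x0 z] x0 by (auto simp: g_def hmap_def)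
      then have "g x0 = hmap X z x0" using hmin[OF gD] x0 by blast
      then have "max (\<phi> y0) 0 = d_inf x0 z" using x0 by (simp add: g_def hmap_def)
      then have "d_inf x0 z = 0" "\<phi> y0 < 0" using lt by auto
      moreover have "\<phi> x0 = 0" using \<open>d_inf x0 z = 0\<close> d_sym[of z x0] by (simp add: \<phi>_def)
      ultimately show ?thesis using y0(2)[OF x0] by linarith
    qed
  qed
  then show ?thesis using fh by blast
qed

lemma iso_main:
  assumes cX: "compact X" and ne: "X \<noteq> {}" and FE: "surrounding X = minimal_pts X"
  shows "isometric (surrounding X) d_inf (tight_span X d_inf) (sup_dist X)"
  unfolding isometric_def
proof (intro exI[of _ "hmap X"] conjI ballI)
  have bX: "bounded X" using cX compact_imp_bounded by blast
  have dist: "sup_dist X (hmap X z) (hmap X z') = d_inf z z'" if "z' \<in> surrounding X" for z z'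
    using h_dist[OF ne that] .
  show "sup_dist X (hmap X z) (hmap X z') = d_inf z z'" if "z \<in> surrounding X" "z' \<in> surrounding X" for z z'
    using dist that by blast
  show "bij_betw (hmap X) (surrounding X) (tight_span X d_inf)"
    unfolding bij_betw_def
  proof (intro conjI)
    show "inj_on (hmap X) (surrounding X)"
    proof (rule inj_onI)
      fix z z' assume "z \<in> surrounding X" "z' \<in> surrounding X" "hmap X z = hmap X z'"
      then have "d_inf z z' = sup_dist X (hmap X z') (hmap X z')" using dist by metis
      also have "\<dots> = 0" using ne by (simp add: sup_dist_def)
      finally show "z = z'" by (rule d_eq0)
    qed
    show "hmap X ` surrounding X = tight_span X d_inf"
    proof
      show "hmap X ` surrounding X \<subseteq> tight_span X d_inf" using h_tight[OF bX] FE by auto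
      show "tight_span X d_inf \<subseteq> hmap X ` surrounding X" using h_surj[OF cX ne] FE by blast
    qed
  qed
qed

lemma iso_sym: "isometric A dA B dB \<Longrightarrow> isometric B dB A dA"
  unfolding isometric_def
proof (elim exE conjE, intro exI[of _ "inv_into A _"] conjI ballI)
  fix h assume h: "bij_betw h A B" "\<forall>x\<in>A. \<forall>y\<in>A. dB (h x) (h y) = dA x y"
  show "bij_betw (inv_into A h) B A" using h(1) by (rule bij_betw_inv_into)
  fix x y assume "x \<in> B" "y \<in> B"
  then show "dA (inv_into A h x) (inv_into A h y) = dB x y"
    using h by (metis bij_betw_imp_surj_on bij_betw_inv_into bij_betw_apply f_inv_into_f)
qed

lemma iso_trans: "isometric A dA B dB \<Longrightarrow> isometric B dB C dC \<Longrightarrow> isometric A dA C dC"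
  unfolding isometric_def
proof (elim exE conjE, intro exI[of _ "_ \<circ> _"] conjI ballI)
  fix h g assume h: "bij_betw h A B" "\<forall>x\<in>A. \<forall>y\<in>A. dB (h x) (h y) = dA x y"
    and g: "bij_betw g B C" "\<forall>x\<in>B. \<forall>y\<in>B. dC (g x) (g y) = dB x y"
  show "bij_betw (g \<circ> h) A C" using h(1) g(1) by (rule bij_betw_trans)
  fix x y assume "x \<in> A" "y \<in> A"
  then show "dC ((g \<circ> h) x) ((g \<circ> h) y) = dA x y" using h g by (simp add: bij_betw_apply)
qed


theorem theorem5p17:
  defines "S \<equiv> sphere (0::real^3) 1" and "D \<equiv> cball (0::real^3) 1"
  shows "surrounding S = minimal_pts S
      \<and> isometric (surrounding S) d_inf (tight_span S d_inf) (sup_dist S)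
      \<and> surrounding D = minimal_pts D
      \<and> minimal_pts D = surrounding S
      \<and> isometric (surrounding D) d_inf (tight_span D d_inf) (sup_dist D)
      \<and> isometric (tight_span D d_inf) (sup_dist D) (tight_span S d_inf) (sup_dist S)"
proof -
  have axS: "axis i 1 \<in> S" "- axis i 1 \<in> S" for i by (simp_all add: S_def)
  have axD: "axis i 1 \<in> D" "- axis i 1 \<in> D" for i by (simp_all add: D_def)
  have SD: "S \<subseteq> cball 0 1" "D \<subseteq> cball 0 1" by (auto simp: S_def D_def)
  have FS: "surrounding S = minimal_pts S"
    using E_sub_F[OF SD(1) axS] F_sub_E[of S] by blast
  have FD: "surrounding D = minimal_pts D"
    using E_sub_F[OF SD(2) axD] F_sub_E[of D] by blast
  have DS: "surrounding D = surrounding S" unfolding S_def D_def by (rule FD_eq_FS)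
  have cS: "compact S" "S \<noteq> {}" using axS by (auto simp: S_def)
  have cD: "compact D" "D \<noteq> {}" using axD by (auto simp: D_def)
  have iS: "isometric (surrounding S) d_inf (tight_span S d_inf) (sup_dist S)"
    by (rule iso_main[OF cS FS])
  have iD: "isometric (surrounding D) d_inf (tight_span D d_inf) (sup_dist D)"
    by (rule iso_main[OF cD FD])
  have "isometric (tight_span D d_inf) (sup_dist D) (tight_span S d_inf) (sup_dist S)"
    using iso_trans[OF iso_sym[OF iD] iS[folded DS]] .
  then show ?thesis using FS FD DS iS iD by simp
qed

end
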